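(* Let $G$ be a Lie group with multiplication $\mu(x,y)=xy$, division $\delta(x,y)=x^{-1}y$ (both maps $G\times G\to G$) and inversion $I\colon G\to G$, $I(x)=x^{-1}$. Then $\mathrm{D}(\mu,\delta)=\mathrm{D}(\mathrm{id}_G,I)$.
   Context: For continuous maps $f,g\colon X\to Y$, the homotopic distance $\mathrm{D}(f,g)$ is the least integer $n\geq 0$ such that there is an open cover $\{U_0,\dots,U_n\}$ of $X$ with $f|_{U_j}\simeq g|_{U_j}$ for all $j$; if no such cover exists, $\mathrm{D}(f,g)=\infty$. *)

theory Defs
  imports "HOL-Analysis.Analysis" "HOL-Algebra.Group" "HOL-Library.Extended_Nat"
begin

definition hd_cover :: "'a topology \<Rightarrow> 'b topology \<Rightarrow> ('a \<Rightarrow> 'b) \<Rightarrow> ('a \<Rightarrow> 'b) \<Rightarrow> nat \<Rightarrow> bool"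
  where "hd_cover X Y f g n \<longleftrightarrow>
    (\<exists>U :: nat \<Rightarrow> 'a set.
        (\<forall>j\<le>n. openin X (U j) \<and> homotopic_with (\<lambda>_. True) (subtopology X (U j)) Y f g)
      \<and> topspace X \<subseteq> (\<Union>j\<le>n. U j))"

text \<open>Homotopic distance: least such \<open>n\<close>, and \<open>\<infinity>\<close> (= Inf of the empty set) if none exists.\<close>
definition homotopic_distance :: "'a topology \<Rightarrow> 'b topology \<Rightarrow> ('a \<Rightarrow> 'b) \<Rightarrow> ('a \<Rightarrow> 'b) \<Rightarrow> enat"
  where "homotopic_distance X Y f g = Inf (enat ` {n. hd_cover X Y f g n})"

fun iter_deriv :: "'a::real_normed_vector list \<Rightarrow> ('a \<Rightarrow> 'b::real_normed_vector) \<Rightarrow> 'a \<Rightarrow> 'b"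
  where "iter_deriv [] f = f"
  | "iter_deriv (v # vs) f = (\<lambda>x. frechet_derivative (iter_deriv vs f) (at x) v)"

definition smooth_on :: "'a::euclidean_space set \<Rightarrow> ('a \<Rightarrow> 'b::euclidean_space) \<Rightarrow> bool"
  where "smooth_on S f \<longleftrightarrow> open S \<and> (\<forall>vs. (\<forall>x\<in>S. iter_deriv vs f differentiable (at x)))"

definition is_chart :: "'a topology \<Rightarrow> 'a set \<times> ('a \<Rightarrow> 'e::euclidean_space) \<Rightarrow> bool"
  where "is_chart X c \<longleftrightarrow> openin X (fst c) \<and> open (snd c ` fst c) \<and>
      homeomorphic_map (subtopology X (fst c)) (top_of_set (snd c ` fst c)) (snd c)"

definition chart_inv :: "'a set \<times> ('a \<Rightarrow> 'e) \<Rightarrow> 'e \<Rightarrow> 'a"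
  where "chart_inv c = inv_into (fst c) (snd c)"

definition smooth_atlas :: "'a topology \<Rightarrow> ('a set \<times> ('a \<Rightarrow> 'e::euclidean_space)) set \<Rightarrow> bool"
  where "smooth_atlas X A \<longleftrightarrow>
     (\<forall>c\<in>A. is_chart X c) \<and> topspace X \<subseteq> (\<Union>c\<in>A. fst c) \<and>
     (\<forall>c\<in>A. \<forall>d\<in>A. smooth_on (snd c ` (fst c \<inter> fst d)) (snd d \<circ> chart_inv c))"

definition lie_group :: "('a, 'm) monoid_scheme \<Rightarrow> 'a topology \<Rightarrow> ('a set \<times> ('a \<Rightarrow> 'e::euclidean_space)) set \<Rightarrow> bool"
  where "lie_group G X A \<longleftrightarrow>
     group G \<and> carrier G = topspace X \<and> Hausdorff_space X \<and> second_countable X \<and>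
     continuous_map (prod_topology X X) X (\<lambda>(x, y). x \<otimes>\<^bsub>G\<^esub> y) \<and>
     continuous_map X X (\<lambda>x. inv\<^bsub>G\<^esub> x) \<and>
     smooth_atlas X A \<and>
     (\<forall>c\<in>A. \<forall>d\<in>A. \<forall>e\<in>A.
        smooth_on {(a, b). a \<in> snd c ` fst c \<and> b \<in> snd d ` fst d \<and>
                           chart_inv c a \<otimes>\<^bsub>G\<^esub> chart_inv d b \<in> fst e}
                  (\<lambda>(a, b). snd e (chart_inv c a \<otimes>\<^bsub>G\<^esub> chart_inv d b))) \<and>
     (\<forall>c\<in>A. \<forall>e\<in>A.
        smooth_on {a. a \<in> snd c ` fst c \<and> inv\<^bsub>G\<^esub> (chart_inv c a) \<in> fst e}
                  (\<lambda>a. snd e (inv\<^bsub>G\<^esub> (chart_inv c a))))"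

end

theory Submission
  imports Defs
begin

lemma dir1:
  fixes G :: "('a, 'm) monoid_scheme" and X :: "'a topology"
  assumes cm: "continuous_map (prod_topology X X) X (\<lambda>(x, y). x \<otimes>\<^bsub>G\<^esub> y)"
    and h: "hd_cover X X id (\<lambda>x. inv\<^bsub>G\<^esub> x) n"
  shows "hd_cover (prod_topology X X) X (\<lambda>(x, y). x \<otimes>\<^bsub>G\<^esub> y) (\<lambda>(x, y). inv\<^bsub>G\<^esub> x \<otimes>\<^bsub>G\<^esub> y) n"
proof -
  obtain U where U: "\<And>j. j \<le> n \<Longrightarrow> openin X (U j) \<and> homotopic_with (\<lambda>_. True) (subtopology X (U j)) X id (\<lambda>x. inv\<^bsub>G\<^esub> x)"
    and cov: "topspace X \<subseteq> (\<Union>j\<le>n. U j)"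
    using h unfolding hd_cover_def by blast
  define V where "V j = U j \<times> topspace X" for j
  show ?thesis unfolding hd_cover_def
  proof (intro exI[of _ V] conjI allI impI)
    show "topspace (prod_topology X X) \<subseteq> (\<Union>j\<le>n. V j)"
      using cov by (auto simp: V_def)
    fix j assume j: "j \<le> n"
    show "openin (prod_topology X X) (V j)"
      unfolding V_def using U[OF j] by (simp add: openin_prod_Times_iff)
    have hU: "homotopic_with (\<lambda>_. True) (subtopology X (U j)) X id (\<lambda>x. inv\<^bsub>G\<^esub> x)"
      using U[OF j] by blast
    have hid: "homotopic_with (\<lambda>_. True) X X id id" by simp
    have hp: "homotopic_with (\<lambda>_. True) (prod_topology (subtopology X (U j)) X) (prod_topology X X)
       (\<lambda>z. (id (fst z), id (snd z))) (\<lambda>z. (inv\<^bsub>G\<^esub> (fst z), id (snd z)))"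
      by (rule homotopic_with_prod_topology[OF hU hid]) simp
    have hc: "homotopic_with (\<lambda>_. True) (prod_topology (subtopology X (U j)) X) X
       ((\<lambda>(x, y). x \<otimes>\<^bsub>G\<^esub> y) \<circ> (\<lambda>z. (id (fst z), id (snd z))))
       ((\<lambda>(x, y). x \<otimes>\<^bsub>G\<^esub> y) \<circ> (\<lambda>z. (inv\<^bsub>G\<^esub> (fst z), id (snd z))))"
      by (rule homotopic_with_compose_continuous_map_left[OF hp cm]) simp
    have eq1: "((\<lambda>(x, y). x \<otimes>\<^bsub>G\<^esub> y) \<circ> (\<lambda>z. (id (fst z), id (snd z)))) = (\<lambda>(x, y). x \<otimes>\<^bsub>G\<^esub> y)"
      by (auto simp: fun_eq_iff)
    have eq2: "((\<lambda>(x, y). x \<otimes>\<^bsub>G\<^esub> y) \<circ> (\<lambda>z. (inv\<^bsub>G\<^esub> (fst z), id (snd z)))) = (\<lambda>(x, y). inv\<^bsub>G\<^esub> x \<otimes>\<^bsub>G\<^esub> y)"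
      by (auto simp: fun_eq_iff)
    show "homotopic_with (\<lambda>_. True) (subtopology (prod_topology X X) (V j)) X
        (\<lambda>(x, y). x \<otimes>\<^bsub>G\<^esub> y) (\<lambda>(x, y). inv\<^bsub>G\<^esub> x \<otimes>\<^bsub>G\<^esub> y)"
      using hc unfolding eq1 eq2 V_def prod_topology_subtopology(1) .
  qed
qed

lemma dir2:
  fixes G :: "('a, 'm) monoid_scheme" and X :: "'a topology"
  assumes grp: "group G" and car: "carrier G = topspace X"
    and h: "hd_cover (prod_topology X X) X (\<lambda>(x, y). x \<otimes>\<^bsub>G\<^esub> y) (\<lambda>(x, y). inv\<^bsub>G\<^esub> x \<otimes>\<^bsub>G\<^esub> y) n"
  shows "hd_cover X X id (\<lambda>x. inv\<^bsub>G\<^esub> x) n"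
proof -
  obtain W where W: "\<And>j. j \<le> n \<Longrightarrow> openin (prod_topology X X) (W j) \<and> homotopic_with (\<lambda>_. True) (subtopology (prod_topology X X) (W j)) X
        (\<lambda>(x, y). x \<otimes>\<^bsub>G\<^esub> y) (\<lambda>(x, y). inv\<^bsub>G\<^esub> x \<otimes>\<^bsub>G\<^esub> y)"
    and cov: "topspace (prod_topology X X) \<subseteq> (\<Union>j\<le>n. W j)"
    using h unfolding hd_cover_def by blast
  have one: "\<one>\<^bsub>G\<^esub> \<in> topspace X" using grp car by (metis group.is_monoid monoid.one_closed)
  define e where "e = (\<lambda>x::'a. (x, \<one>\<^bsub>G\<^esub>))"
  have ce: "continuous_map X (prod_topology X X) e"
    unfolding e_def using one by (simp add: continuous_map_pairwise o_def)
  define U where "U j = {x \<in> topspace X. e x \<in> W j}" for j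
  show ?thesis unfolding hd_cover_def
  proof (intro exI[of _ U] conjI allI impI)
    show "topspace X \<subseteq> (\<Union>j\<le>n. U j)"
      using cov one by (auto simp: U_def e_def)
    fix j assume j: "j \<le> n"
    show "openin X (U j)"
      unfolding U_def using W[OF j] ce by (simp add: openin_continuous_map_preimage)
    have hW: "homotopic_with (\<lambda>_. True) (subtopology (prod_topology X X) (W j)) X
        (\<lambda>(x, y). x \<otimes>\<^bsub>G\<^esub> y) (\<lambda>(x, y). inv\<^bsub>G\<^esub> x \<otimes>\<^bsub>G\<^esub> y)" using W[OF j] by blast
    have ce': "continuous_map (subtopology X (U j)) (subtopology (prod_topology X X) (W j)) e"
      by (rule continuous_map_into_subtopology[OF continuous_map_from_subtopology[OF ce]])
         (auto simp: U_def)
    have hc: "homotopic_with (\<lambda>_. True) (subtopology X (U j)) X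
        ((\<lambda>(x, y). x \<otimes>\<^bsub>G\<^esub> y) \<circ> e) ((\<lambda>(x, y). inv\<^bsub>G\<^esub> x \<otimes>\<^bsub>G\<^esub> y) \<circ> e)"
      by (rule homotopic_with_compose_continuous_map_right[OF hW ce']) simp
    show "homotopic_with (\<lambda>_. True) (subtopology X (U j)) X id (\<lambda>x. inv\<^bsub>G\<^esub> x)"
    proof (rule homotopic_with_eq[OF hc])
      fix x assume "x \<in> topspace (subtopology X (U j))"
      then have x: "x \<in> carrier G" using car by (auto simp: U_def)
      show "id x = ((\<lambda>(x, y). x \<otimes>\<^bsub>G\<^esub> y) \<circ> e) x"
        using x grp by (simp add: e_def group.is_monoid monoid.r_one)
      show "inv\<^bsub>G\<^esub> x = ((\<lambda>(x, y). inv\<^bsub>G\<^esub> x \<otimes>\<^bsub>G\<^esub> y) \<circ> e) x"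
        using x grp by (simp add: e_def group.is_monoid monoid.r_one group.inv_closed)
    qed simp
  qed
qed

theorem proposition4p3:
  fixes G :: "('a, 'm) monoid_scheme" and X :: "'a topology"
    and A :: "('a set \<times> ('a \<Rightarrow> 'e::euclidean_space)) set"
  assumes "lie_group G X A"
  shows "homotopic_distance (prod_topology X X) X
            (\<lambda>(x, y). x \<otimes>\<^bsub>G\<^esub> y) (\<lambda>(x, y). inv\<^bsub>G\<^esub> x \<otimes>\<^bsub>G\<^esub> y)
       = homotopic_distance X X id (\<lambda>x. inv\<^bsub>G\<^esub> x)"
proof -
  have g: "group G" "carrier G = topspace X"
    "continuous_map (prod_topology X X) X (\<lambda>(x, y). x \<otimes>\<^bsub>G\<^esub> y)"
    using assms unfolding lie_group_def by auto
  have "{n. hd_cover (prod_topology X X) X (\<lambda>(x, y). x \<otimes>\<^bsub>G\<^esub> y) (\<lambda>(x, y). inv\<^bsub>G\<^esub> x \<otimes>\<^bsub>G\<^esub> y) n}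
      = {n. hd_cover X X id (\<lambda>x. inv\<^bsub>G\<^esub> x) n}"
    using dir1[OF g(3)] dir2[OF g(1,2)] by blast
  then show ?thesis unfolding homotopic_distance_def by simp
qed

end
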